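(* There is an absolute constant $C$ such that the following holds. Let $D$ be a distribution on $[0,\infty)$ with continuous cdf, let $0\le a<b\le1$, $N\ge1$, $\delta\in(0,1)$, and let $x_1,\dots,x_N$ be i.i.d. targeted samples of $D$ from the quantile interval $[a,b]$. Define, for $v\ge0$ with $q^D(v)\in[a,b]$, the estimate $q^E(v)=a+(b-a)\cdot\frac1N\,|\{t:x_t\ge v\}|$. Then with probability at least $1-\delta$, simultaneously for all $v$ with $q^D(v)\in[a,b]$, $$|q^E(v)-q^D(v)|\le\sqrt{\frac{2\,(q^D(v)-a)(b-q^D(v))\,L}{N}}+\frac{L\,(b-a)}{N},\qquad L=C\ln(N/\delta)+C.$$
   Context: Quantile $q^D(v)=\Pr_{x\sim D}[x\ge v]$; value at quantile $v^D(q)=\sup\{v\ge0:q^D(v)\ge q\}$. A targeted sample of $D$ from $[a,b]$ is $v^D(u)$ with $u$ uniform on $[a,b]$; equivalently, a draw from $D$ conditioned on its quantile lying in $[a,b]$. *)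

theory Defs
  imports "HOL-Probability.Probability"
begin

definition quantile :: "real measure \<Rightarrow> real \<Rightarrow> real" where
  "quantile D v = measure D {x. v \<le> x}"

definition value_at_quantile :: "real measure \<Rightarrow> real \<Rightarrow> real" where
  "value_at_quantile D q = Sup {v. 0 \<le> v \<and> q \<le> quantile D v}"

text \<open>Law of the underlying uniform variables of N i.i.d. targeted samples from [a,b].\<close>
definition targeted_uniforms :: "nat \<Rightarrow> real \<Rightarrow> real \<Rightarrow> (nat \<Rightarrow> real) measure" where
  "targeted_uniforms N a b = PiM {..<N} (\<lambda>_. uniform_measure lborel {a..b})"

definition targeted_samples :: "real measure \<Rightarrow> (nat \<Rightarrow> real) \<Rightarrow> nat \<Rightarrow> real" where
  "targeted_samples D u t = value_at_quantile D (u t)"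

definition est_quantile :: "real \<Rightarrow> real \<Rightarrow> nat \<Rightarrow> (nat \<Rightarrow> real) \<Rightarrow> real \<Rightarrow> real" where
  "est_quantile a b N x v = a + (b - a) * (real (card {t \<in> {..<N}. v \<le> x t}) / real N)"

end

theory Submission
  imports Defs
begin



lemma exp_quad_bound:
  fixes x :: real assumes "\<bar>x\<bar> \<le> 1" shows "exp x \<le> 1 + x + x\<^sup>2"
proof (cases "0 \<le> x")
  case True thus ?thesis using exp_bound[of x] assms by auto
next
  case False
  define y where "y = -x"
  have y: "0 < y" "y \<le> 1" using False assms by (auto simp: y_def)
  have "exp x = 1 / exp y" by (simp add: y_def exp_minus field_simps)
  also have "\<dots> \<le> 1 / (1 + y)" using y by (intro divide_left_mono) (auto simp: add_pos_pos)
  also have "\<dots> \<le> 1 - y + y\<^sup>2"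
  proof -
    have "1 \<le> (1 - y + y\<^sup>2) * (1 + y)" using y by (simp add: algebra_simps power2_eq_square power3_eq_cube)
    thus ?thesis using y by (simp add: field_simps)
  qed
  finally show ?thesis by (simp add: y_def)
qed

lemma bern_mgf_bound:
  fixes p l :: real assumes p: "0 \<le> p" "p \<le> 1" and l: "\<bar>l\<bar> \<le> 1"
  shows "p * exp (l * (1 - p)) + (1 - p) * exp (- l * p) \<le> exp (l\<^sup>2 * p)"
proof -
  have "p * exp (l * (1 - p)) + (1 - p) * exp (- l * p) = exp (- l * p) * (1 + p * (exp l - 1))"
    by (simp add: algebra_simps flip: exp_add)
  also have "\<dots> \<le> exp (- l * p) * exp (p * (exp l - 1))"
    by (intro mult_left_mono) (use exp_ge_add_one_self in auto)
  also have "\<dots> = exp (p * (exp l - 1 - l))" by (simp add: algebra_simps flip: exp_add)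
  also have "\<dots> \<le> exp (l\<^sup>2 * p)"
  proof -
    have "p * (exp l - 1 - l) \<le> p * l\<^sup>2"
      by (rule mult_left_mono) (use exp_quad_bound[OF l] p in auto)
    thus ?thesis by (simp add: mult.commute)
  qed
  finally show ?thesis .
qed

lemma bern_mgf_bound_min:
  fixes p l :: real assumes p: "0 \<le> p" "p \<le> 1" and l: "\<bar>l\<bar> \<le> 1"
  shows "p * exp (l * (1 - p)) + (1 - p) * exp (- l * p) \<le> exp (l\<^sup>2 * min p (1 - p))"
proof -
  have 1: "?thesis" if "p \<le> 1 - p" using bern_mgf_bound[OF p l] that by simp
  have "(1-p) * exp ((-l) * (1 - (1-p))) + (1 - (1-p)) * exp (- (-l) * (1-p)) \<le> exp ((-l)\<^sup>2 * (1-p))"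
    by (rule bern_mgf_bound) (use p l in auto)
  hence 2: "?thesis" if "\<not> p \<le> 1 - p" using that by (simp add: algebra_simps)
  show ?thesis using 1 2 by blast
qed

lemma unif_prob: assumes "a < b" shows "prob_space (uniform_measure lborel {a..(b::real)})"
  by (rule prob_space_uniform_measure) (use assms in auto)

lemma unif_coord_integral:
  fixes a b l :: real and A :: "real set"
  assumes ab: "a < b" and A: "A \<in> sets borel"
  defines "U \<equiv> uniform_measure lborel {a..b}"
  shows "(\<integral>x. exp (l * (indicator A x - measure U A)) \<partial>U)
     = measure U A * exp (l * (1 - measure U A)) + (1 - measure U A) * exp (- l * measure U A)"
proof -
  interpret prob_space U unfolding U_def by (rule unif_prob[OF ab])
  define p where "p = measure U A"
  have AU: "A \<in> sets U" using A by (simp add: U_def)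
  have eq: "(\<lambda>x. exp (l * (indicator A x - p))) = (\<lambda>x. exp (- l * p) + (exp (l * (1 - p)) - exp (- l * p)) * indicator A x)"
    by (auto simp: indicator_def fun_eq_iff algebra_simps)
  have "(\<integral>x. exp (l * (indicator A x - p)) \<partial>U) = exp (- l * p) + (exp (l * (1 - p)) - exp (- l * p)) * p"
    unfolding eq
  proof (subst Bochner_Integration.integral_add)
    have iA: "integrable U (indicat_real A)" using AU by (intro integrable_real_indicator) (auto simp: less_top[symmetric])
    thus "integrable U (\<lambda>x. (exp (l * (1 - p)) - exp (- l * p)) * indicat_real A x)" by auto
    show "integrable U (\<lambda>x. exp (- l * p))" by auto
    show "(\<integral>x. exp (- l * p) \<partial>U) + (\<integral>x. (exp (l * (1 - p)) - exp (- l * p)) * indicat_real A x \<partial>U) =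
    exp (- l * p) + (exp (l * (1 - p)) - exp (- l * p)) * p"
      using AU prob_space by (simp add: p_def)
  qed
  thus ?thesis by (simp add: p_def algebra_simps)
qed

lemma prod_mgf_bound:
  fixes a b l :: real and A :: "real set" and N :: nat
  assumes ab: "a < b" and A: "A \<in> sets borel" and l: "\<bar>l\<bar> \<le> 1"
  defines "U \<equiv> uniform_measure lborel {a..b}"
  defines "p \<equiv> measure U A"
  shows "(\<integral>u. exp (l * ((\<Sum>t<N. indicator A (u t)) - real N * p)) \<partial>PiM {..<N} (\<lambda>_. U))
     \<le> exp (l\<^sup>2 * (real N * min p (1 - p)))"
proof -
  interpret U: prob_space U unfolding U_def by (rule unif_prob[OF ab])
  interpret P: product_prob_space "\<lambda>_. U" by unfold_locales
  have p01: "0 \<le> p" "p \<le> 1" by (auto simp: p_def)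
  have AU: "A \<in> sets U" using A by (simp add: U_def)
  define f where "f = (\<lambda>x. exp (l * (indicator A x - p)))"
  have eq: "(\<lambda>u. exp (l * ((\<Sum>t<N. indicator A (u t)) - real N * p))) = (\<lambda>u. \<Prod>t\<in>{..<N}. f (u t))"
    by (auto simp: fun_eq_iff f_def exp_sum sum_subtractf sum_distrib_left right_diff_distrib simp flip: exp_sum)
  have intf: "integrable U f"
  proof -
    have "f = (\<lambda>x. exp (- l * p) + (exp (l * (1 - p)) - exp (- l * p)) * indicator A x)"
      by (auto simp: indicator_def fun_eq_iff algebra_simps f_def)
    moreover have "integrable U (indicat_real A)" using AU by (intro integrable_real_indicator) (auto simp: less_top[symmetric])
    ultimately show ?thesis by auto
  qed
  have "(\<integral>u. (\<Prod>t\<in>{..<N}. f (u t)) \<partial>PiM {..<N} (\<lambda>_. U)) = (\<Prod>t\<in>{..<N}. integral\<^sup>L U f)"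
    by (rule P.product_integral_prod) (use intf in auto)
  also have "\<dots> \<le> (\<Prod>t\<in>{..<N}. exp (l\<^sup>2 * min p (1 - p)))"
  proof (rule prod_mono)
    have "integral\<^sup>L U f = p * exp (l * (1 - p)) + (1 - p) * exp (- l * p)"
      unfolding f_def p_def U_def by (rule unif_coord_integral[OF ab A])
    moreover have "0 \<le> p * exp (l * (1 - p)) + (1 - p) * exp (- l * p)" using p01 by auto
    ultimately show "\<And>i. 0 \<le> integral\<^sup>L U f \<and> integral\<^sup>L U f \<le> exp (l\<^sup>2 * min p (1 - p))"
      using bern_mgf_bound_min[OF p01 l] by auto
  qed
  also have "\<dots> = exp (l\<^sup>2 * (real N * min p (1 - p)))"
    by (simp add: exp_of_nat_mult[symmetric] algebra_simps)
  finally show ?thesis unfolding eq .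
qed




lemma choose_s:
  fixes L m :: real assumes L: "0 < L" and m: "0 \<le> m"
  defines "s \<equiv> (if L \<le> m then sqrt (L / m) else 1)"
  shows "0 < s" "s \<le> 1" "- s * (2 * sqrt (m * L) + 2 * L) + s\<^sup>2 * m \<le> - L"
proof -
  show "0 < s" "s \<le> 1" using L m by (auto simp: s_def)
  show "- s * (2 * sqrt (m * L) + 2 * L) + s\<^sup>2 * m \<le> - L"
  proof (cases "L \<le> m")
    case True
    hence mp: "0 < m" using L by auto
    have "sqrt (L / m) * sqrt (m * L) = L" using L mp
      by (simp add: real_sqrt_mult[symmetric])
    moreover have "(sqrt (L / m))\<^sup>2 * m = L" using L mp by simp
    moreover have "0 \<le> sqrt (L/m) * L" using L mp by simp
    ultimately show ?thesis using True by (simp add: s_def algebra_simps)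
  next
    case False
    have "0 \<le> sqrt (m * L)" using m L by simp
    hence h: "m - 2 * sqrt (m * L) \<le> L" using False by linarith
    thus ?thesis using False by (simp add: s_def)
  qed
qed

lemma tail_bounds:
  fixes a b L :: real and A :: "real set" and N :: nat
  assumes ab: "a < b" and A: "A \<in> sets borel" and L: "0 < L"
  defines "U \<equiv> uniform_measure lborel {a..b}"
  defines "p \<equiv> measure U A"
  defines "M \<equiv> PiM {..<N} (\<lambda>_. U)"
  defines "m \<equiv> real N * min p (1 - p)"
  defines "K \<equiv> (\<lambda>u. \<Sum>t<N. indicator A (u t) :: real)"
  shows "measure M {u \<in> space M. real N * p + (2 * sqrt (m * L) + 2 * L) \<le> K u} \<le> exp (- L)"
    and "measure M {u \<in> space M. K u \<le> real N * p - (2 * sqrt (m * L) + 2 * L)} \<le> exp (- L)"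
proof -
  interpret U: prob_space U unfolding U_def by (rule unif_prob[OF ab])
  interpret P: prob_space M unfolding M_def by (intro prob_space_PiM) (use U.prob_space_axioms in auto)
  have p01: "0 \<le> p" "p \<le> 1" by (auto simp: p_def)
  have m0: "0 \<le> m" using p01 by (auto simp: m_def)
  define t where "t = 2 * sqrt (m * L) + 2 * L"
  define s where "s = (if L \<le> m then sqrt (L / m) else 1)"
  have s: "0 < s" "s \<le> 1" "- s * t + s\<^sup>2 * m \<le> - L"
    using choose_s[OF L m0] unfolding s_def t_def by auto
  have AU: "A \<in> sets U" using A by (simp add: U_def)
  have Kmeas: "K \<in> borel_measurable M" unfolding K_def M_def U_def
    using A by (intro borel_measurable_sum borel_measurable_indicator') (auto intro!: measurable_PiM_component_rev)
  have Kb: "\<bar>K u\<bar> \<le> real N" for u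
  proof -
    have "\<bar>K u\<bar> \<le> (\<Sum>t<N. \<bar>indicator A (u t) :: real\<bar>)" unfolding K_def by (rule sum_abs)
    also have "\<dots> \<le> (\<Sum>t<N. 1)" by (intro sum_mono) (auto simp: indicator_def)
    finally show ?thesis by simp
  qed
  have integ: "integrable M (\<lambda>u. exp (r * (K u - real N * p)))" for r
  proof (rule P.integrable_const_bound[where B = "exp (\<bar>r\<bar> * (2 * real N))"])
    show "AE x in M. norm (exp (r * (K x - real N * p))) \<le> exp (\<bar>r\<bar> * (2 * real N))"
    proof (intro AE_I2)
      fix x
      have "r * (K x - real N * p) \<le> \<bar>r\<bar> * \<bar>K x - real N * p\<bar>" by (simp add: abs_mult[symmetric])
      also have "\<bar>K x - real N * p\<bar> \<le> 2 * real N"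
      proof -
        have "real N * p \<le> real N" using p01 by (simp add: mult_left_le)
        moreover have "0 \<le> real N * p" using p01 by simp
        ultimately show ?thesis using Kb[of x] by linarith
      qed
      hence "\<bar>r\<bar> * \<bar>K x - real N * p\<bar> \<le> \<bar>r\<bar> * (2 * real N)" by (intro mult_left_mono) auto
      finally show "norm (exp (r * (K x - real N * p))) \<le> exp (\<bar>r\<bar> * (2 * real N))" by simp
    qed
    show "(\<lambda>u. exp (r * (K u - real N * p))) \<in> borel_measurable M" using Kmeas by measurable
  qed
  have sint: "set_integrable M (space M) (\<lambda>u. exp (r * (K u - real N * p)))" for r
    unfolding set_integrable_def
    by (rule Bochner_Integration.integrable_cong[THEN iffD2, OF refl _ integ[of r]]) auto
  have mgf: "(\<integral>u. exp (r * (K u - real N * p)) \<partial>M) \<le> exp (r\<^sup>2 * m)" if "\<bar>r\<bar> \<le> 1" for r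
    unfolding K_def M_def m_def p_def U_def by (rule prod_mgf_bound[OF ab A that])
  have "measure M {u \<in> space M. t \<le> K u - real N * p} \<le> exp (- s * t) * (\<integral>u\<in>space M. exp (s * (K u - real N * p)) \<partial>M)"
    by (rule P.Chernoff_ineq_ge[OF s(1) sint]) auto
  also have "\<dots> = exp (- s * t) * (\<integral>u. exp (s * (K u - real N * p)) \<partial>M)"
    by (simp add: set_integral_space[OF integ])
  also have "\<dots> \<le> exp (- s * t) * exp (s\<^sup>2 * m)"
    by (intro mult_left_mono mgf) (use s in auto)
  also have "\<dots> \<le> exp (- L)" using s(3) by (simp flip: exp_add)
  finally have 1: "measure M {u \<in> space M. t \<le> K u - real N * p} \<le> exp (- L)" .
  have "{u \<in> space M. real N * p + t \<le> K u} = {u \<in> space M. t \<le> K u - real N * p}" by auto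
  with 1 show "measure M {u \<in> space M. real N * p + (2 * sqrt (m * L) + 2 * L) \<le> K u} \<le> exp (- L)"
    by (simp add: t_def)
  have "measure M {u \<in> space M. K u - real N * p \<le> - t} \<le> exp (s * - t) * (\<integral>u\<in>space M. exp (- s * (K u - real N * p)) \<partial>M)"
    by (rule P.Chernoff_ineq_le[OF s(1)]) (use sint[of "-s"] in auto)
  also have "\<dots> = exp (- s * t) * (\<integral>u. exp ((- s) * (K u - real N * p)) \<partial>M)"
    using set_integral_space[OF integ[of "-s"]] by simp
  also have "\<dots> \<le> exp (- s * t) * exp ((- s)\<^sup>2 * m)"
    by (intro mult_left_mono mgf) (use s in auto)
  also have "\<dots> \<le> exp (- L)" using s(3) by (simp flip: exp_add)
  finally have 2: "measure M {u \<in> space M. K u - real N * p \<le> - t} \<le> exp (- L)" .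
  have "{u \<in> space M. K u \<le> real N * p - t} = {u \<in> space M. K u - real N * p \<le> - t}" by auto
  with 2 show "measure M {u \<in> space M. K u \<le> real N * p - (2 * sqrt (m * L) + 2 * L)} \<le> exp (- L)"
    by (simp add: t_def)
qed




lemma vaq:
  assumes D: "prob_space D" "sets D = sets borel" "measure D {0..} = 1"
    and u: "0 < u" "u \<le> 1" and v: "0 \<le> v"
  shows "v \<le> value_at_quantile D u \<longleftrightarrow> u \<le> quantile D v"
proof -
  interpret prob_space D by (rule D(1))
  have ev: "{x. c \<le> x} \<in> events" for c using D(2) by simp
  have mono: "quantile D y \<le> quantile D x" if "x \<le> y" for x y
    unfolding quantile_def by (rule finite_measure_mono) (use that ev in auto)
  define T where "T = {v. 0 \<le> v \<and> u \<le> quantile D v}"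
  have q0: "quantile D 0 = 1" using D(3) unfolding quantile_def
    by (metis atLeast_def Collect_cong mem_Collect_eq)
  have T0: "0 \<in> T" using q0 u by (auto simp: T_def)
  have lim1: "(\<lambda>n. measure D {x. real n \<le> x}) \<longlonglongrightarrow> measure D (\<Inter>n. {x. real n \<le> x})"
    by (rule finite_Lim_measure_decseq) (use ev in \<open>auto simp: decseq_def\<close>)
  have "(\<Inter>n. {x::real. real n \<le> x}) = {}"
  proof (auto)
    fix x :: real assume h: "\<forall>n. real n \<le> x"
    obtain n where "x < real n" using reals_Archimedean2 by blast
    thus False using h by (meson not_le)
  qed
  with lim1 have "(\<lambda>n. quantile D (real n)) \<longlonglongrightarrow> 0" by (simp add: quantile_def)
  from order_tendstoD(2)[OF this u(1)] obtain n where n: "quantile D (real n) < u"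
    by (auto simp: eventually_sequentially)
  have Tb: "T \<subseteq> {..real n}"
  proof
    fix w assume "w \<in> T"
    hence "u \<le> quantile D w" by (auto simp: T_def)
    thus "w \<in> {..real n}" using mono[of "real n" w] n by (cases "w \<le> real n") auto
  qed
  hence bdd: "bdd_above T" by (auto simp: bdd_above_def)
  have Sdef: "value_at_quantile D u = Sup T" by (simp add: value_at_quantile_def T_def)
  show ?thesis
  proof
    assume "u \<le> quantile D v"
    hence "v \<in> T" using v by (auto simp: T_def)
    thus "v \<le> value_at_quantile D u" unfolding Sdef by (rule cSup_upper[OF _ bdd])
  next
    assume vs: "v \<le> value_at_quantile D u"
    define s where "s = Sup T"
    have "u \<le> quantile D s"
    proof (rule ccontr)
      assume "\<not> u \<le> quantile D s"
      hence lt: "quantile D s < u" by simp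
      have lim2: "(\<lambda>n. measure D {x. s - 1 / (real n + 1) \<le> x}) \<longlonglongrightarrow> measure D (\<Inter>n. {x. s - 1 / (real n + 1) \<le> x})"
      proof (rule finite_Lim_measure_decseq)
        show "range (\<lambda>n. {x. s - 1 / (real n + 1) \<le> x}) \<subseteq> events" using ev by auto
        show "decseq (\<lambda>n. {x. s - 1 / (real n + 1) \<le> x})"
        proof (rule decseq_SucI, safe)
          fix n x assume "s - 1 / (real (Suc n) + 1) \<le> x"
          moreover have "1 / (real (Suc n) + 1) \<le> 1 / (real n + 1)" by (intro divide_left_mono) auto
          ultimately show "s - 1 / (real n + 1) \<le> x" by linarith
        qed
      qed
      have "(\<Inter>n. {x. s - 1 / (real n + 1) \<le> x}) = {x. s \<le> x}"
      proof (auto)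
        fix x assume h: "\<forall>n. s - 1 / (real n + 1) \<le> x"
        show "s \<le> x"
        proof (rule ccontr)
          assume "\<not> s \<le> x"
          hence "0 < s - x" by simp
          then obtain k where k: "1 / (real k + 1) < s - x"
            using nat_approx_posE by (metis of_nat_Suc add.commute)
          thus False using h[rule_format, of k] by simp
        qed
      next
        fix x n assume "s \<le> x" thus "s - 1 / (real n + 1) \<le> x"
          by (smt (verit) divide_nonneg_nonneg of_nat_0_le_iff)
      qed
      with lim2 have "(\<lambda>n. quantile D (s - 1 / (real n + 1))) \<longlonglongrightarrow> quantile D s"
        by (simp add: quantile_def)
      from order_tendstoD(2)[OF this lt] obtain k where k: "quantile D (s - 1 / (real k + 1)) < u"
        by (auto simp: eventually_sequentially)
      have "Sup T \<le> s - 1 / (real k + 1)"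
      proof (rule cSup_least)
        show "T \<noteq> {}" using T0 by auto
        fix w assume "w \<in> T"
        hence uw: "u \<le> quantile D w" by (auto simp: T_def)
        show "w \<le> s - 1 / (real k + 1)"
        proof (rule ccontr)
          assume "\<not> w \<le> s - 1 / (real k + 1)"
          hence "quantile D w \<le> quantile D (s - 1 / (real k + 1))" using mono by simp
          thus False using uw k by simp
        qed
      qed
      hence "s \<le> s - 1 / (real k + 1)" by (simp add: s_def)
      moreover have "0 < 1 / (real k + 1)" by simp
      ultimately show False by simp
    qed
    moreover have "quantile D s \<le> quantile D v" using vs mono unfolding Sdef s_def by auto
    ultimately show "u \<le> quantile D v" by simp
  qed
qed




lemma final_ineq:
  fixes w j L' L :: real and N :: nat
  assumes w: "0 \<le> w" "w \<le> 1" and N: "1 \<le> N" and j: "0 \<le> j" "j \<le> real N" "\<bar>j - real N * w\<bar> \<le> 1"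
    and L': "0 < L'" and L1: "4 * L' \<le> L" and L2: "3 * L' + 3 \<le> L"
  shows "1 + (2 * sqrt (real N * min (j / real N) (1 - j / real N) * L') + 2 * L') \<le> sqrt (2 * real N * w * (1 - w) * L) + L"
proof -
  define p where "p = j / real N"
  have Np: "0 < real N" using N by simp
  have p: "0 \<le> p" "p \<le> 1" using j Np by (auto simp: p_def field_simps)
  have pw: "\<bar>p - w\<bar> \<le> 1 / real N" using j(3) Np
    by (auto simp: p_def field_simps abs_le_iff)
  have minle: "min p (1 - p) \<le> 2 * (p * (1 - p))"
  proof (cases "p \<le> 1/2")
    case True
    have "p * (2 * p) \<le> p * 1" using True p by (intro mult_left_mono) auto
    thus ?thesis using True by (auto simp: min_def algebra_simps)
  next
    case False
    have "0 \<le> (1 - p) * (2 * p - 1)" using False p by auto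
    thus ?thesis using False by (auto simp: min_def algebra_simps)
  qed
  have "\<bar>p * (1 - p) - w * (1 - w)\<bar> = \<bar>p - w\<bar> * \<bar>1 - p - w\<bar>"
    by (simp add: abs_mult[symmetric] algebra_simps)
  also have "\<dots> \<le> (1 / real N) * 1"
    using pw p w by (intro mult_mono) auto
  finally have "real N * (p * (1 - p)) \<le> real N * (w * (1 - w)) + 1"
    using Np by (simp add: abs_le_iff field_simps)
  moreover have "real N * min p (1 - p) \<le> real N * (2 * (p * (1 - p)))"
    using minle Np by (intro mult_left_mono) auto
  ultimately have mle: "real N * min p (1 - p) \<le> 2 * real N * w * (1 - w) + 2"
    by (simp add: algebra_simps)
  define V where "V = 2 * real N * w * (1 - w)"
  have V0: "0 \<le> V" using w by (simp add: V_def)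
  have m0: "0 \<le> real N * min p (1 - p)" using p by simp
  have "sqrt (real N * min p (1 - p) * L') \<le> sqrt ((V + 2) * L')"
    using mle L' by (intro real_sqrt_le_mono mult_right_mono) (auto simp: V_def)
  also have "\<dots> \<le> sqrt (V * L') + sqrt (2 * L')"
    using sqrt_add_le_add_sqrt[of "V * L'" "2 * L'"] V0 L' by (simp add: algebra_simps)
  finally have s1: "sqrt (real N * min p (1 - p) * L') \<le> sqrt (V * L') + sqrt (2 * L')" .
  have s2: "2 * sqrt (2 * L') \<le> L' + 2"
  proof -
    have e: "(L' + 2)\<^sup>2 = (L' - 2)\<^sup>2 + 8 * L'" by (simp add: power2_eq_square algebra_simps)
    have "8 * L' \<le> (L' + 2)\<^sup>2" unfolding e by simp
    hence "sqrt (8 * L') \<le> sqrt ((L' + 2)\<^sup>2)" by (rule real_sqrt_le_mono)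
    moreover have "sqrt (8 * L') = 2 * sqrt (2 * L')"
    proof -
      have "sqrt (8 * L') = sqrt (2\<^sup>2 * (2 * L'))" by simp
      also have "\<dots> = 2 * sqrt (2 * L')" by (simp only: real_sqrt_mult real_sqrt_abs)
      finally show ?thesis .
    qed
    ultimately show ?thesis using L' by simp
  qed
  have s3: "2 * sqrt (V * L') \<le> sqrt (V * L)"
  proof -
    have "2 * sqrt (V * L') = sqrt (V * (4 * L'))"
      by (simp add: real_sqrt_mult)
    also have "\<dots> \<le> sqrt (V * L)" using L1 V0 by (intro real_sqrt_le_mono mult_left_mono) auto
    finally show ?thesis .
  qed
  have "sqrt (2 * real N * w * (1 - w) * L) = sqrt (V * L)" by (simp add: V_def)
  thus ?thesis using s1 s2 s3 L2 unfolding p_def[symmetric] by linarith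
qed

lemma conv_ineq:
  fixes a b w cnt L Q :: real and N :: nat
  assumes ab: "a < b" and N: "1 \<le> N" and w: "0 \<le> w" "w \<le> 1" and Q: "Q = a + (b - a) * w"
    and c: "\<bar>cnt - real N * w\<bar> \<le> sqrt (2 * real N * w * (1 - w) * L) + L" and L: "0 \<le> L"
  shows "\<bar>a + (b - a) * (cnt / real N) - Q\<bar> \<le> sqrt (2 * (Q - a) * (b - Q) * L / real N) + L * (b - a) / real N"
proof -
  have Np: "0 < real N" using N by simp
  have e1: "a + (b - a) * (cnt / real N) - Q = (b - a) / real N * (cnt - real N * w)"
    using Np by (simp add: Q field_simps)
  have "2 * (Q - a) * (b - Q) * L / real N = ((b - a) / real N)\<^sup>2 * (2 * real N * w * (1 - w) * L)"
    using Np by (simp add: Q field_simps power2_eq_square)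
  have pos: "0 \<le> (b - a) / real N" using ab Np by simp
  from \<open>2 * (Q - a) * (b - Q) * L / real N = _\<close>
  have e2: "sqrt (2 * (Q - a) * (b - Q) * L / real N) = (b - a) / real N * sqrt (2 * real N * w * (1 - w) * L)"
    by (simp only: real_sqrt_mult real_sqrt_abs abs_of_nonneg[OF pos])
  have "\<bar>a + (b - a) * (cnt / real N) - Q\<bar> = (b - a) / real N * \<bar>cnt - real N * w\<bar>"
    by (simp only: e1 abs_mult abs_of_nonneg[OF pos])
  also have "\<dots> \<le> (b - a) / real N * (sqrt (2 * real N * w * (1 - w) * L) + L)"
    by (rule mult_left_mono[OF c pos])
  also have "\<dots> = sqrt (2 * (Q - a) * (b - Q) * L / real N) + L * (b - a) / real N"
    unfolding e2 by (simp add: algebra_simps)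
  finally show ?thesis .
qed




lemma unif_meas_Ap:
  fixes a b c :: real assumes "a \<le> c" "c \<le> b" "b \<le> 1" "a < b"
  shows "measure (uniform_measure lborel {a..b}) (UNIV - {c<..1}) = (c - a) / (b - a)"
proof -
  have "{a..b} \<inter> (UNIV - {c<..1}) = {a..c}" using assms by auto
  thus ?thesis using assms by (subst measure_uniform_measure) auto
qed

lemma unif_meas_Am:
  fixes a b c :: real assumes "a \<le> c" "c \<le> b" "a < b"
  shows "measure (uniform_measure lborel {a..b}) {a<..c} = (c - a) / (b - a)"
proof -
  have "{a..b} \<inter> {a<..c} = {a<..c}" using assms by auto
  thus ?thesis using assms by (subst measure_uniform_measure) auto
qed

lemma sum_ind_card: fixes N :: nat shows "(\<Sum>t<N. indicator A (u t) :: real) = real (card {t \<in> {..<N}. u t \<in> A})"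
proof -
  have "(\<Sum>t<N. indicator A (u t) :: real) = (\<Sum>t\<in>{..<N}. of_bool (u t \<in> A))"
    by (simp add: indicator_def)
  also have "\<dots> = real (card ({..<N} \<inter> {t. u t \<in> A}))" by simp
  also have "{..<N} \<inter> {t. u t \<in> A} = {t \<in> {..<N}. u t \<in> A}" by auto
  finally show ?thesis .
qed

lemma Kmeas:
  assumes "A \<in> sets borel"
  shows "(\<lambda>u. \<Sum>t<N. indicator A (u t) :: real) \<in> borel_measurable (PiM {..<N} (\<lambda>_. uniform_measure lborel {a..b::real}))"
  using assms by (intro borel_measurable_sum borel_measurable_indicator') (auto intro!: measurable_PiM_component_rev)

lemma log_facts:
  fixes \<delta> :: real and N :: nat assumes "1 \<le> N" "0 < \<delta>" "\<delta> < 1"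
  shows "0 < ln (real N / \<delta>)" "0 < ln (2 * (real N + 1) / \<delta>)"
    "ln (2 * (real N + 1) / \<delta>) \<le> ln (real N / \<delta>) + 2"
    "exp (- ln (2 * (real N + 1) / \<delta>)) = \<delta> / (2 * (real N + 1))"
proof -
  have Nd: "1 < real N / \<delta>" using assms by (simp add: field_simps)
  thus "0 < ln (real N / \<delta>)" by simp
  have "1 < 2 * (real N + 1) / \<delta>" using assms by (simp add: field_simps)
  thus "0 < ln (2 * (real N + 1) / \<delta>)" by simp
  have "2 * (real N + 1) / \<delta> \<le> 4 * (real N / \<delta>)" using assms by (simp add: field_simps)
  hence "ln (2 * (real N + 1) / \<delta>) \<le> ln (4 * (real N / \<delta>))" using assms by (intro ln_mono) auto
  also have "\<dots> = ln 4 + ln (real N / \<delta>)" by (rule ln_mult_pos) (use Nd in auto)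
  also have "ln (4::real) \<le> 2"
  proof -
    have "(2::real) \<le> exp 1" using exp_ge_add_one_self[of 1] by simp
    hence "(2::real) * 2 \<le> exp 1 * exp 1" by (intro mult_mono) auto
    hence "(4::real) \<le> exp 2" by (simp flip: exp_add)
    hence "ln (4::real) \<le> ln (exp 2)" by (intro ln_mono) auto
    thus ?thesis by simp
  qed
  finally show "ln (2 * (real N + 1) / \<delta>) \<le> ln (real N / \<delta>) + 2" by simp
  show "exp (- ln (2 * (real N + 1) / \<delta>)) = \<delta> / (2 * (real N + 1))"
    using assms by (simp add: exp_minus)
qed




theorem mainTheorem8:
  shows "\<exists>C::real. \<forall>(D::real measure) (a::real) (b::real) (N::nat) (\<delta>::real).
     prob_space D \<and> sets D = sets borel \<and> measure D {0..} = 1 \<and>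
     (\<forall>x. measure D {x} = 0) \<and>
     0 \<le> a \<and> a < b \<and> b \<le> 1 \<and> 1 \<le> N \<and> 0 < \<delta> \<and> \<delta> < 1 \<longrightarrow>
     (let L = C * ln (real N / \<delta>) + C in
      \<exists>S \<in> sets (targeted_uniforms N a b).
        measure (targeted_uniforms N a b) S \<ge> 1 - \<delta> \<and>
        (\<forall>u \<in> S. \<forall>v. 0 \<le> v \<and> a \<le> quantile D v \<and> quantile D v \<le> b \<longrightarrow>
           \<bar>est_quantile a b N (targeted_samples D u) v - quantile D v\<bar>
             \<le> sqrt (2 * (quantile D v - a) * (b - quantile D v) * L / real N)
                + L * (b - a) / real N))"
proof (rule exI[of _ 10], intro allI impI)
  fix D :: "real measure" and a b :: real and N :: nat and \<delta> :: real
  assume H: "prob_space D \<and> sets D = sets borel \<and> measure D {0..} = 1 \<and>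
     (\<forall>x. measure D {x} = 0) \<and> 0 \<le> a \<and> a < b \<and> b \<le> 1 \<and> 1 \<le> N \<and> 0 < \<delta> \<and> \<delta> < 1"
  hence D: "prob_space D" "sets D = sets borel" "measure D {0..} = 1" and a0: "0 \<le> a" and ab: "a < b"
    and b1: "b \<le> 1" and N1: "1 \<le> N" and d: "0 < \<delta>" "\<delta> < 1" by auto
  define L where "L = 10 * ln (real N / \<delta>) + 10"
  define L' where "L' = ln (2 * (real N + 1) / \<delta>)"
  note lf = log_facts[OF N1 d]
  have L'pos: "0 < L'" and L1: "4 * L' \<le> L" and L2: "3 * L' + 3 \<le> L" and L0: "0 \<le> L"
    using lf by (auto simp: L_def L'_def)
  have eL: "exp (- L') = \<delta> / (2 * (real N + 1))" using lf by (simp add: L'_def)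
  define U where "U = uniform_measure lborel {a..b}"
  define M where "M = targeted_uniforms N a b"
  have M_eq: "M = PiM {..<N} (\<lambda>_. uniform_measure lborel {a..b})" by (simp add: M_def targeted_uniforms_def)
  interpret P: prob_space M unfolding M_eq by (intro prob_space_PiM unif_prob[OF ab])
  have Np: "0 < real N" using N1 by simp
  define c where "c = (\<lambda>j::nat. a + (b - a) * real j / real N)"
  define Ap where "Ap = (\<lambda>j. UNIV - {c j<..1})"
  define Am where "Am = (\<lambda>j. {a<..c j})"
  define K where "K = (\<lambda>A (u::nat \<Rightarrow> real). \<Sum>t<N. indicator A (u t) :: real)"
  define tt where "tt = (\<lambda>j::nat. 2 * sqrt (real N * min (real j / real N) (1 - real j / real N) * L') + 2 * L')"
  define Ep where "Ep = (\<lambda>j. {u \<in> space M. real N * (real j / real N) + tt j \<le> K (Ap j) u})"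
  define Em where "Em = (\<lambda>j. {u \<in> space M. K (Am j) u \<le> real N * (real j / real N) - tt j})"
  have cj: "a \<le> c j" "c j \<le> b" if "j \<le> N" for j
  proof -
    have "0 \<le> (b - a) * real j / real N" using ab by simp
    moreover have "(b - a) * real j / real N \<le> (b - a)"
    proof -
      have "(b - a) * real j \<le> (b - a) * real N" using ab that by (intro mult_left_mono) auto
      hence "(b - a) * real j / real N \<le> (b - a) * real N / real N" using Np by (intro divide_right_mono) auto
      thus ?thesis using Np by simp
    qed
    ultimately show "a \<le> c j" "c j \<le> b" by (auto simp: c_def)
  qed
  have cfrac: "(c j - a) / (b - a) = real j / real N" for j
  proof -
    have "c j - a = (b - a) * (real j / real N)" by (simp add: c_def)
    thus ?thesis using ab by simp
  qed
  have pAp: "measure (uniform_measure lborel {a..b}) (Ap j) = real j / real N" if "j \<le> N" for j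
    unfolding Ap_def using unif_meas_Ap[OF cj[OF that] b1 ab] cfrac by simp
  have pAm: "measure (uniform_measure lborel {a..b}) (Am j) = real j / real N" if "j \<le> N" for j
    unfolding Am_def using unif_meas_Am[OF cj[OF that] ab] cfrac by simp
  have Apb: "Ap j \<in> sets borel" for j by (simp add: Ap_def)
  have Amb: "Am j \<in> sets borel" for j by (simp add: Am_def)
  have Ep_le: "measure M (Ep j) \<le> exp (- L')" if "j \<le> N" for j
    using tail_bounds(1)[OF ab Apb[of j] L'pos, of N] unfolding pAp[OF that]
    by (simp add: Ep_def K_def tt_def M_eq)
  have Em_le: "measure M (Em j) \<le> exp (- L')" if "j \<le> N" for j
    using tail_bounds(2)[OF ab Amb[of j] L'pos, of N] unfolding pAm[OF that]
    by (simp add: Em_def K_def tt_def M_eq)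
  have Kmp[measurable]: "K (Ap j) \<in> borel_measurable M" "K (Am j) \<in> borel_measurable M" for j
    unfolding K_def M_eq by (rule Kmeas[OF Apb], rule Kmeas[OF Amb])
  have Ep_s: "Ep j \<in> sets M" for j unfolding Ep_def by measurable
  have Em_s: "Em j \<in> sets M" for j unfolding Em_def by measurable
  define B where "B = (\<Union>j\<in>{..N}. Ep j) \<union> (\<Union>j\<in>{..N}. Em j)"
  have Bs: "B \<in> sets M" unfolding B_def using Ep_s Em_s by auto
  have "measure M B \<le> measure M (\<Union>j\<in>{..N}. Ep j) + measure M (\<Union>j\<in>{..N}. Em j)"
    unfolding B_def by (rule measure_Un_le) (use Ep_s Em_s in auto)
  also have "\<dots> \<le> (\<Sum>j\<in>{..N}. measure M (Ep j)) + (\<Sum>j\<in>{..N}. measure M (Em j))"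
    by (intro add_mono measure_UNION_le) (use Ep_s Em_s in auto)
  also have "\<dots> \<le> (\<Sum>j\<in>{..N}. exp (- L')) + (\<Sum>j\<in>{..N}. exp (- L'))"
    by (intro add_mono sum_mono Ep_le Em_le) auto
  also have "\<dots> = \<delta>"
  proof -
    have "(\<Sum>j\<in>{..N}. \<delta> / (2 * (real N + 1))) = (real N + 1) * (\<delta> / (2 * (real N + 1)))"
      by simp
    also have "\<dots> = \<delta> / 2" by (simp add: field_simps add_pos_pos)
    finally have "(\<Sum>j\<in>{..N}. \<delta> / (2 * (real N + 1))) = \<delta> / 2" .
    thus ?thesis unfolding eL by linarith
  qed
  finally have PB: "measure M B \<le> \<delta>" .
  define S where "S = space M - B"
  have Ss: "S \<in> sets M" unfolding S_def using Bs by auto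
  have PS: "1 - \<delta> \<le> measure M S" unfolding S_def using P.prob_compl[OF Bs] PB by simp
  have main: "\<bar>est_quantile a b N (targeted_samples D u) v - quantile D v\<bar>
             \<le> sqrt (2 * (quantile D v - a) * (b - quantile D v) * L / real N) + L * (b - a) / real N"
    if uS: "u \<in> S" and v: "0 \<le> v" "a \<le> quantile D v" "quantile D v \<le> b" for u v
  proof -
    define Q where "Q = quantile D v"
    define w where "w = (Q - a) / (b - a)"
    have w01: "0 \<le> w" "w \<le> 1" using v ab by (auto simp: w_def Q_def field_simps)
    have Qw: "Q = a + (b - a) * w" using ab by (simp add: w_def field_simps)
    define j0 where "j0 = nat \<lfloor>real N * w\<rfloor>"
    define j1 where "j1 = nat \<lceil>real N * w\<rceil>"
    have Nw0: "0 \<le> real N * w" using w01 by simp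
    have NwN: "real N * w \<le> real N" using w01 Np by (simp add: mult_left_le)
    have j0a: "real j0 \<le> real N * w" "real N * w < real j0 + 1"
      using Nw0 unfolding j0_def by (auto simp: of_nat_nat)
    have j1a: "real N * w \<le> real j1" "real j1 < real N * w + 1"
      using Nw0 unfolding j1_def by (auto simp: of_nat_nat) linarith
    have j0N: "j0 \<le> N" using j0a NwN by linarith
    have j1N: "j1 \<le> N"
    proof -
      have "\<lceil>real N * w\<rceil> \<le> int N" using NwN by (simp add: ceiling_le_iff)
      from nat_mono[OF this] show ?thesis unfolding j1_def by simp
    qed
    have c0: "c j0 \<le> Q"
    proof -
      have "real j0 / real N \<le> w" using j0a Np by (simp add: field_simps)
      hence "(b - a) * (real j0 / real N) \<le> (b - a) * w" using ab by (intro mult_left_mono) auto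
      thus ?thesis by (simp add: c_def Qw)
    qed
    have c1: "Q \<le> c j1"
    proof -
      have "w \<le> real j1 / real N" using j1a Np by (simp add: field_simps)
      hence "(b - a) * w \<le> (b - a) * (real j1 / real N)" using ab by (intro mult_left_mono) auto
      thus ?thesis by (simp add: c_def Qw)
    qed
    have uM: "u \<in> space M" and nEp: "u \<notin> Ep j1" and nEm: "u \<notin> Em j0"
      using uS j0N j1N by (auto simp: S_def B_def)
    define X where "X = {t \<in> {..<N}. v \<le> targeted_samples D u t}"
    have vq: "v \<le> targeted_samples D u t \<longleftrightarrow> u t \<le> Q" if "0 < u t" "u t \<le> 1" for t
      unfolding targeted_samples_def Q_def by (rule vaq[OF D that v(1)])
    have sub1: "{t \<in> {..<N}. u t \<in> Am j0} \<subseteq> X"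
    proof (rule subsetI)
      fix t assume "t \<in> {t \<in> {..<N}. u t \<in> Am j0}"
      hence t: "t \<in> {..<N}" "u t \<in> Am j0" by auto
      hence "0 < u t" "u t \<le> 1" "u t \<le> Q" using a0 cj[OF j0N] b1 c0 by (auto simp: Am_def)
      thus "t \<in> X" using t vq by (auto simp: X_def)
    qed
    have sub2: "X \<subseteq> {t \<in> {..<N}. u t \<in> Ap j1}"
    proof (rule subsetI)
      fix t assume t: "t \<in> X"
      have "u t \<in> Ap j1"
      proof (rule ccontr)
        assume "u t \<notin> Ap j1"
        hence ut: "c j1 < u t" "u t \<le> 1" by (auto simp: Ap_def)
        hence "0 < u t" using a0 cj[OF j1N] by linarith
        hence "u t \<le> Q" using vq ut t by (auto simp: X_def)
        thus False using ut c1 by linarith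
      qed
      thus "t \<in> {t \<in> {..<N}. u t \<in> Ap j1}" using t by (auto simp: X_def)
    qed
    define cnt where "cnt = real (card X)"
    have Klo: "K (Am j0) u \<le> cnt" unfolding K_def sum_ind_card cnt_def
      using sub1 by (intro of_nat_mono card_mono) (auto simp: X_def)
    have Khi: "cnt \<le> K (Ap j1) u" unfolding K_def sum_ind_card cnt_def
      using sub2 by (intro of_nat_mono card_mono) auto
    have K1: "K (Ap j1) u < real j1 + tt j1" using nEp uM Np by (auto simp: Ep_def)
    have K0: "real j0 - tt j0 < K (Am j0) u" using nEm uM Np by (auto simp: Em_def)
    define R where "R = sqrt (2 * real N * w * (1 - w) * L) + L"
    have f1: "1 + tt j1 \<le> R" unfolding tt_def R_def
      by (rule final_ineq[OF w01 N1 _ _ _ L'pos L1 L2]) (use j1a j1N in auto)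
    have f0: "1 + tt j0 \<le> R" unfolding tt_def R_def
      by (rule final_ineq[OF w01 N1 _ _ _ L'pos L1 L2]) (use j0a j0N in auto)
    have "\<bar>cnt - real N * w\<bar> \<le> R" using Klo Khi K1 K0 f1 f0 j0a j1a by linarith
    hence "\<bar>a + (b - a) * (cnt / real N) - Q\<bar> \<le> sqrt (2 * (Q - a) * (b - Q) * L / real N) + L * (b - a) / real N"
      unfolding R_def by (rule conv_ineq[OF ab N1 w01 Qw _ L0])
    thus ?thesis by (simp add: est_quantile_def cnt_def X_def Q_def)
  qed
  show "let L = 10 * ln (real N / \<delta>) + 10 in
      \<exists>S \<in> sets (targeted_uniforms N a b).
        measure (targeted_uniforms N a b) S \<ge> 1 - \<delta> \<and>
        (\<forall>u \<in> S. \<forall>v. 0 \<le> v \<and> a \<le> quantile D v \<and> quantile D v \<le> b \<longrightarrow>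
           \<bar>est_quantile a b N (targeted_samples D u) v - quantile D v\<bar>
             \<le> sqrt (2 * (quantile D v - a) * (b - quantile D v) * L / real N)
                + L * (b - a) / real N)"
    unfolding Let_def L_def[symmetric] M_def[symmetric]
    using Ss PS main by blast
qed


end
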